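(* Let $d=4$ and $G=\{(1),(12)(34),(13)(24),(14)(23)\}\le S_4$. Then $Aut_0(T_{4;G})\cong S_3\times S_6$. More precisely: $T_{(4;G)}$ and $T_{(3,1);G}$ are singletons; $T_{(2^2);G}$ and $T_{(2,1^2);G}$ each have three elements; $T_{(1^4);G}$ has six elements; every element of $Aut_0(T_{4;G})$ permutes the three elements of $T_{(2^2);G}$ and correspondingly the three elements of $T_{(2,1^2);G}$ (each $(2^2)$-orbit lying above exactly one $(2,1^2)$-orbit), and the $S_3$ factor consists of these simultaneous permutations, while the $S_6$ factor consists of all permutations of the six elements of $T_{(1^4);G}$.
   Context: For $\lambda=(\lambda_1\ge\dots\ge\lambda_k>0)$ a partition of $d$, a tabloid of shape $\lambda$ is a sequence $A=(A_1,\dots,A_k)$ of pairwise disjoint subsets of $\{1,\dots,d\}$ with $|A_i|=\lambda_i$; $T_\lambda$ is their set and $T_d$ the union over all partitions. $S_d$ acts by $\zeta A=(\zeta(A_1),\dots,\zeta(A_k))$. $T_d$ is partially ordered by: $A\le B$ iff $A_1\cup\dots\cup A_i\subseteq B_1\cup\dots\cup B_i$ for all $i\ge1$ (missing rows taken empty). For $G\le S_d$, $T_{\lambda;G}$ is the set of $G$-orbits in $T_\lambda$, $T_{d;G}$ the set of all $G$-orbits in $T_d$, partially ordered by $a\le b$ iff there are $A\in a$, $B\in b$ with $A\le B$. $Aut_0(T_{d;G})$ is the group of bijections $\alpha$ of $T_{d;G}$ with $\alpha(a)\le\alpha(b)\iff a\le b$ and $\alpha(T_{\mu;G})=T_{\mu;G}$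 for every partition $\mu$ of $d$. *)

theory Defs
  imports "HOL-Algebra.Sym_Groups" "HOL-Algebra.Bij" "HOL-Combinatorics.Transposition"
begin

definition partitions :: "nat \<Rightarrow> nat list set" where
  "partitions d = {lam. sorted_wrt (\<ge>) lam \<and> (\<forall>x\<in>set lam. 0 < x) \<and> sum_list lam = d}"

definition tabloids :: "nat \<Rightarrow> nat list \<Rightarrow> nat set list set" where
  "tabloids d lam = {A. length A = length lam
      \<and> (\<forall>i<length A. A ! i \<subseteq> {1..d} \<and> card (A ! i) = lam ! i)
      \<and> (\<forall>i<length A. \<forall>j<length A. i \<noteq> j \<longrightarrow> A ! i \<inter> A ! j = {})}"

definition tab_act :: "(nat \<Rightarrow> nat) \<Rightarrow> nat set list \<Rightarrow> nat set list" where
  "tab_act z A = map ((`) z) A"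

text \<open>Dominance order: A <= B iff A_1 u..u A_i is contained in B_1 u..u B_i for all i >= 1
  (missing rows are empty; take i beyond the length yields the whole list).\<close>
definition tab_le :: "nat set list \<Rightarrow> nat set list \<Rightarrow> bool" where
  "tab_le A B \<longleftrightarrow> (\<forall>i\<ge>1. \<Union>(set (take i A)) \<subseteq> \<Union>(set (take i B)))"

definition tab_orbit :: "(nat \<Rightarrow> nat) set \<Rightarrow> nat set list \<Rightarrow> nat set list set" where
  "tab_orbit G A = (\<lambda>g. tab_act g A) ` G"

definition orbits_shape :: "nat \<Rightarrow> (nat \<Rightarrow> nat) set \<Rightarrow> nat list \<Rightarrow> nat set list set set" where
  "orbits_shape d G lam = tab_orbit G ` tabloids d lam"

definition orbits :: "nat \<Rightarrow> (nat \<Rightarrow> nat) set \<Rightarrow> nat set list set set" where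
  "orbits d G = (\<Union>lam\<in>partitions d. orbits_shape d G lam)"

definition orbit_le :: "nat set list set \<Rightarrow> nat set list set \<Rightarrow> bool" where
  "orbit_le a b \<longleftrightarrow> (\<exists>A\<in>a. \<exists>B\<in>b. tab_le A B)"

definition Aut0_set :: "nat \<Rightarrow> (nat \<Rightarrow> nat) set \<Rightarrow> (nat set list set \<Rightarrow> nat set list set) set" where
  "Aut0_set d G = {\<alpha> \<in> Bij (orbits d G).
      (\<forall>a\<in>orbits d G. \<forall>b\<in>orbits d G. orbit_le (\<alpha> a) (\<alpha> b) \<longleftrightarrow> orbit_le a b)
      \<and> (\<forall>mu\<in>partitions d. \<alpha> ` orbits_shape d G mu = orbits_shape d G mu)}"

definition Aut0 :: "nat \<Rightarrow> (nat \<Rightarrow> nat) set \<Rightarrow> (nat set list set \<Rightarrow> nat set list set) monoid" where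
  "Aut0 d G = (BijGroup (orbits d G))\<lparr>carrier := Aut0_set d G\<rparr>"

definition Klein4 :: "(nat \<Rightarrow> nat) set" where
  "Klein4 = {id, transpose 1 2 \<circ> transpose 3 4, transpose 1 3 \<circ> transpose 2 4,
             transpose 1 4 \<circ> transpose 2 3}"

end

theory Submission
  imports Defs
begin


lemma set4_eq: "S \<subseteq> {1,2,3,4} \<Longrightarrow> T \<subseteq> {1,2,3,4} \<Longrightarrow> (S = T) =
  ((1 \<in> S \<longleftrightarrow> 1 \<in> T) \<and> (2 \<in> S \<longleftrightarrow> 2 \<in> T) \<and> (3 \<in> S \<longleftrightarrow> 3 \<in> T) \<and> ((4::nat) \<in> S \<longleftrightarrow> 4 \<in> T))"
  by auto

definition reps :: "nat set list list" where "reps = [[{1,2,3,4}], [{1,2,3},{4}],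
  [{1,2},{3,4}], [{1,3},{2,4}], [{1,4},{2,3}], [{1,2},{3},{4}], [{1,3},{2},{4}], [{1,4},{2},{3}],
  [{1},{2},{3},{4}], [{1},{2},{4},{3}], [{1},{3},{2},{4}], [{1},{3},{4},{2}], [{1},{4},{2},{3}], [{1},{4},{3},{2}]]"

definition Ob :: "nat \<Rightarrow> nat set list set" where "Ob i = tab_orbit Klein4 (reps ! i)"

lemmas ev = Ob_def reps_def tab_orbit_def Klein4_def tab_act_def transpose_def


lemma row1: "S \<subseteq> {1..4} \<Longrightarrow> card S = Suc 0 \<Longrightarrow> S \<in> {{1},{2},{3},{4::nat}}"
proof -
  assume "S \<subseteq> {1..4}" "card S = Suc 0"
  then have "S \<in> Pow {1,2,3,4}" by auto
  then show ?thesis using \<open>card S = Suc 0\<close> by (simp add: Pow_insert) (elim disjE; simp)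
qed

lemma pow4: "S \<subseteq> {1..4} \<Longrightarrow> S \<in> Pow {1,2,3,4::nat}" by auto

lemma row2: "S \<subseteq> {1..4} \<Longrightarrow> card S = 2 \<Longrightarrow> S \<in> {{1,2},{1,3},{1,4},{2,3},{2,4},{3,4::nat}}"
proof -
  assume a: "S \<subseteq> {1..4}" "card S = 2"
  then obtain x y where xy: "S = {x,y}" "x \<noteq> y" by (auto simp: card_2_iff)
  have "x \<in> {1,2,3,4}" "y \<in> {1,2,3,4}" using a xy by auto
  then show ?thesis using xy by (simp only: insert_iff empty_iff; elim disjE; simp add: doubleton_eq_iff)
qed
lemma row3: "S \<subseteq> {1..4} \<Longrightarrow> card S = 3 \<Longrightarrow> S \<in> {{1,2,3},{1,2,4},{1,3,4},{2,3,4::nat}}"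
proof -
  assume a: "S \<subseteq> {1..4}" "card S = 3"
  have e: "{1..4::nat} = {1,2,3,4}" by auto
  have "\<not> {1,2,3,4} \<subseteq> S"
  proof
    assume "{1,2,3,4} \<subseteq> S"
    then have "S = {1,2,3,4}" using a e by auto
    then show False using a by simp
  qed
  then obtain x where x: "x \<in> {1,2,3,4}" "x \<notin> S" by blast
  have "S \<subseteq> {1,2,3,4} - {x}" using a x e by auto
  moreover have "card ({1,2,3,4} - {x}) = 3" using x by auto
  ultimately have "S = {1,2,3,4} - {x}" using a by (metis card_subset_eq finite_Diff finite.intros)
  then show ?thesis using x by (elim insertE emptyE; simp add: set4_eq)
qed
lemma row4: "S \<subseteq> {1..4} \<Longrightarrow> card S = 4 \<Longrightarrow> S = {1,2,3,4::nat}"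
proof -
  assume a: "S \<subseteq> {1..4}" "card S = 4"
  have e: "{1..4::nat} = {1,2,3,4}" by auto
  show ?thesis using a e by (metis card_subset_eq finite.intros card_atLeastAtMost diff_Suc_1 numeral_eq_Suc pred_numeral_simps(2) finite_atLeastAtMost)
qed
lemma tab_row: "A \<in> tabloids d lam \<Longrightarrow> i < length lam \<Longrightarrow> A!i \<subseteq> {1..d} \<and> card(A!i) = lam!i"
  by (auto simp: tabloids_def)
lemma tab_disj: "A \<in> tabloids d lam \<Longrightarrow> i < length lam \<Longrightarrow> j < length lam \<Longrightarrow> i \<noteq> j \<Longrightarrow> A!i \<inter> A!j = {}"
  by (auto simp: tabloids_def)
lemma tab_len: "A \<in> tabloids d lam \<Longrightarrow> length A = length lam"
  by (auto simp: tabloids_def)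

lemma enum1111: "a \<in> {{1},{2},{3},{4}} \<Longrightarrow> b \<in> {{1},{2},{3},{4}} \<Longrightarrow> c \<in> {{1},{2},{3},{4}} \<Longrightarrow> d \<in> {{1},{2},{3},{4}}
  \<Longrightarrow> a \<inter> b = {} \<Longrightarrow> a \<inter> c = {} \<Longrightarrow> a \<inter> d = {} \<Longrightarrow> b \<inter> c = {} \<Longrightarrow> b \<inter> d = {} \<Longrightarrow> c \<inter> d = {}
  \<Longrightarrow> [a,b,c,d] \<in> Ob 8 \<union> Ob 9 \<union> Ob 10 \<union> Ob 11 \<union> Ob 12 \<union> Ob 13"
  apply (elim insertE emptyE)
  apply (simp_all add: ev doubleton_eq_iff)
  done

lemma enum211: "a \<in> {{1,2},{1,3},{1,4},{2,3},{2,4},{3,4}} \<Longrightarrow> b \<in> {{1},{2},{3},{4}} \<Longrightarrow> c \<in> {{1},{2},{3},{4}}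
  \<Longrightarrow> a \<inter> b = {} \<Longrightarrow> a \<inter> c = {} \<Longrightarrow> b \<inter> c = {}
  \<Longrightarrow> [a,b,c] \<in> Ob 5 \<union> Ob 6 \<union> Ob 7"
  apply (elim insertE emptyE)
  apply (simp_all add: ev doubleton_eq_iff)
  done

lemma enum22: "a \<in> {{1,2},{1,3},{1,4},{2,3},{2,4},{3,4}} \<Longrightarrow> b \<in> {{1,2},{1,3},{1,4},{2,3},{2,4},{3,4}}
  \<Longrightarrow> a \<inter> b = {} \<Longrightarrow> [a,b] \<in> Ob 2 \<union> Ob 3 \<union> Ob 4"
  apply (elim insertE emptyE)
  apply (simp_all add: ev doubleton_eq_iff)
  done

lemma enum31: "a \<in> {{1,2,3},{1,2,4},{1,3,4},{2,3,4}} \<Longrightarrow> b \<in> {{1},{2},{3},{4}}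
  \<Longrightarrow> a \<inter> b = {} \<Longrightarrow> [a,b] \<in> Ob 1"
  apply (elim insertE emptyE)
  apply (simp_all add: ev set4_eq)
  done




lemma k_prods:
  "(transpose 1 2 \<circ> transpose 3 4) \<circ> (transpose 1 2 \<circ> transpose 3 4) = (id::nat\<Rightarrow>nat)"
  "(transpose 1 3 \<circ> transpose 2 4) \<circ> (transpose 1 3 \<circ> transpose 2 4) = (id::nat\<Rightarrow>nat)"
  "(transpose 1 4 \<circ> transpose 2 3) \<circ> (transpose 1 4 \<circ> transpose 2 3) = (id::nat\<Rightarrow>nat)"
  "(transpose 1 2 \<circ> transpose 3 4) \<circ> (transpose 1 3 \<circ> transpose 2 4) = (transpose 1 4 \<circ> transpose 2 3 :: nat\<Rightarrow>nat)"
  "(transpose 1 3 \<circ> transpose 2 4) \<circ> (transpose 1 2 \<circ> transpose 3 4) = (transpose 1 4 \<circ> transpose 2 3 :: nat\<Rightarrow>nat)"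
  "(transpose 1 2 \<circ> transpose 3 4) \<circ> (transpose 1 4 \<circ> transpose 2 3) = (transpose 1 3 \<circ> transpose 2 4 :: nat\<Rightarrow>nat)"
  "(transpose 1 4 \<circ> transpose 2 3) \<circ> (transpose 1 2 \<circ> transpose 3 4) = (transpose 1 3 \<circ> transpose 2 4 :: nat\<Rightarrow>nat)"
  "(transpose 1 3 \<circ> transpose 2 4) \<circ> (transpose 1 4 \<circ> transpose 2 3) = (transpose 1 2 \<circ> transpose 3 4 :: nat\<Rightarrow>nat)"
  "(transpose 1 4 \<circ> transpose 2 3) \<circ> (transpose 1 3 \<circ> transpose 2 4) = (transpose 1 2 \<circ> transpose 3 4 :: nat\<Rightarrow>nat)"
  by (simp_all add: fun_eq_iff transpose_def)

lemma K_inv: "g \<in> Klein4 \<Longrightarrow> g \<circ> g = id"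
  unfolding Klein4_def by (elim insertE emptyE) (simp_all only: k_prods id_comp)

lemma K_comp: "g \<in> Klein4 \<Longrightarrow> h \<in> Klein4 \<Longrightarrow> h \<circ> g \<in> Klein4"
  unfolding Klein4_def by (elim insertE emptyE) (simp_all only: k_prods id_comp comp_id insert_iff simp_thms)

lemma K_id: "id \<in> Klein4" by (simp add: Klein4_def)

lemma K_invol: "g \<in> Klein4 \<Longrightarrow> g (g z) = z"
  using K_inv[of g] by (simp add: fun_eq_iff)

lemma K_inj: "g \<in> Klein4 \<Longrightarrow> inj g"
  by (rule injI) (metis K_invol)

lemma tab_act_comp: "tab_act h (tab_act g A) = tab_act (h \<circ> g) A"
  by (simp add: tab_act_def image_comp)

lemma tab_act_id: "tab_act id A = A"
  by (simp add: tab_act_def)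

lemma union_take_act: "\<Union>(set (take i (tab_act g A))) = g ` \<Union>(set (take i A))"
  by (simp add: tab_act_def take_map image_Union)

lemma tab_le_act: "inj g \<Longrightarrow> tab_le (tab_act g A) (tab_act g B) \<longleftrightarrow> tab_le A B"
  by (simp add: tab_le_def union_take_act inj_image_subset_iff)

lemma orbit_le_orb: "orbit_le (tab_orbit Klein4 R) (tab_orbit Klein4 S) \<longleftrightarrow> (\<exists>g\<in>Klein4. tab_le R (tab_act g S))"
proof
  assume "orbit_le (tab_orbit Klein4 R) (tab_orbit Klein4 S)"
  then obtain h g where hg: "h \<in> Klein4" "g \<in> Klein4" "tab_le (tab_act h R) (tab_act g S)"
    by (auto simp: orbit_le_def tab_orbit_def)
  have "tab_act g S = tab_act h (tab_act (h \<circ> g) S)"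
    by (simp add: tab_act_comp comp_assoc[symmetric] K_inv hg tab_act_id)
  then have "tab_le R (tab_act (h \<circ> g) S)" using hg tab_le_act[OF K_inj[OF hg(1)]] by metis
  then show "\<exists>g\<in>Klein4. tab_le R (tab_act g S)" using K_comp hg by blast
next
  assume "\<exists>g\<in>Klein4. tab_le R (tab_act g S)"
  then obtain g where "g \<in> Klein4" "tab_le R (tab_act g S)" by blast
  then show "orbit_le (tab_orbit Klein4 R) (tab_orbit Klein4 S)"
    unfolding orbit_le_def tab_orbit_def using K_id tab_act_id by (metis image_eqI)
qed

lemma tab_le_fin: "length A \<le> 4 \<Longrightarrow> length B \<le> 4 \<Longrightarrow> tab_le A B \<longleftrightarrow>
   (\<Union>(set (take 1 A)) \<subseteq> \<Union>(set (take 1 B)) \<and> \<Union>(set (take 2 A)) \<subseteq> \<Union>(set (take 2 B)) \<and>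
    \<Union>(set (take 3 A)) \<subseteq> \<Union>(set (take 3 B)) \<and> \<Union>(set (take 4 A)) \<subseteq> \<Union>(set (take 4 B)))"
  unfolding tab_le_def
proof (intro iffI allI impI)
  fix i :: nat assume l: "length A \<le> 4" "length B \<le> 4" and c: "\<Union>(set (take 1 A)) \<subseteq> \<Union>(set (take 1 B)) \<and> \<Union>(set (take 2 A)) \<subseteq> \<Union>(set (take 2 B)) \<and>
    \<Union>(set (take 3 A)) \<subseteq> \<Union>(set (take 3 B)) \<and> \<Union>(set (take 4 A)) \<subseteq> \<Union>(set (take 4 B))" and i: "1 \<le> i"
  show "\<Union>(set (take i A)) \<subseteq> \<Union>(set (take i B))"
  proof (cases "i \<ge> 4")
    case True
    then have "take i A = take 4 A" "take i B = take 4 B" using l by simp_all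
    then show ?thesis using c by simp
  next
    case False
    then have "i = 1 \<or> i = 2 \<or> i = 3" using i by auto
    then show ?thesis using c by auto
  qed
next
  assume h: "\<forall>i\<ge>1. \<Union> (set (take i A)) \<subseteq> \<Union> (set (take i B))"
  show "\<Union>(set (take 1 A)) \<subseteq> \<Union>(set (take 1 B)) \<and> \<Union>(set (take 2 A)) \<subseteq> \<Union>(set (take 2 B)) \<and>
    \<Union>(set (take 3 A)) \<subseteq> \<Union>(set (take 3 B)) \<and> \<Union>(set (take 4 A)) \<subseteq> \<Union>(set (take 4 B))"
    using h[rule_format, of 1] h[rule_format, of 2] h[rule_format, of 3] h[rule_format, of 4] by simp
qed

definition Rn :: "nat \<Rightarrow> nat \<Rightarrow> bool" where
  "Rn i j = (j = 0 \<or> (j = 1 \<and> i \<noteq> 0) \<or> (j \<in> {2,3,4} \<and> (i = j \<or> i = j+3 \<or> i \<ge> 8))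
     \<or> (j \<in> {5,6,7} \<and> (i = j \<or> i \<ge> 8)) \<or> (j \<ge> 8 \<and> i = j))"

lemma tbl: "\<forall>j\<in>{0,1,2,3,4,5,6,7,8,9,10,11,12,13}. \<forall>i\<in>{0,1,2,3,4,5,6,7,8,9,10,11,12,13}. orbit_le (Ob i) (Ob j) = Rn i j"
  unfolding Ob_def orbit_le_orb
  by (simp add: reps_def Klein4_def tab_act_def transpose_def tab_le_fin Rn_def)




lemma part4: "partitions 4 = {[4],[3,1],[2,2],[2,1,1],[1,1,1,1]}"
proof
  show "{[4],[3,1],[2,2],[2,1,1],[1,1,1,1]} \<subseteq> partitions 4" by (auto simp: partitions_def)
  show "partitions 4 \<subseteq> {[4],[3,1],[2,2],[2,1,1],[1,1,1,1]}"
  proof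
    fix l assume "l \<in> partitions 4"
    hence h: "sorted_wrt (\<ge>) l" "\<forall>x\<in>set l. 0 < x" "sum_list l = 4" by (auto simp: partitions_def)
    show "l \<in> {[4],[3,1],[2,2],[2,1,1],[1,1,1,1]}"
    proof (cases l)
      case Nil then show ?thesis using h by simp
    next
      case (Cons a l1)
      show ?thesis
      proof (cases l1)
        case Nil then show ?thesis using h Cons by simp
      next
        case (Cons b l2)
        show ?thesis
        proof (cases l2)
          case Nil then show ?thesis using h Cons \<open>l = a # l1\<close> by auto
        next
          case (Cons c l3)
          show ?thesis
          proof (cases l3)
            case Nil then show ?thesis using h Cons \<open>l = a # l1\<close> \<open>l1 = b # l2\<close> by auto
          next
            case (Cons d l4)
            have e: "a+b+c+d+sum_list l4 = 4" "0<a" "0<b" "0<c" "0<d" using h Cons \<open>l = a # l1\<close> \<open>l1 = b # l2\<close> \<open>l2 = c # l3\<close> by auto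
            have "sum_list l4 = 0" using e by linarith
            moreover have "\<forall>x\<in>set l4. 0<x" using h Cons \<open>l = a # l1\<close> \<open>l1 = b # l2\<close> \<open>l2 = c # l3\<close> by auto
            ultimately have "l4 = []" by (cases l4) auto
            then show ?thesis using h Cons \<open>l = a # l1\<close> \<open>l1 = b # l2\<close> \<open>l2 = c # l3\<close> by auto
          qed
        qed
      qed
    qed
  qed
qed


lemma orb_mem: assumes "A \<in> tab_orbit Klein4 R" shows "tab_orbit Klein4 A = tab_orbit Klein4 R"
proof -
  obtain g where g: "g \<in> Klein4" "A = tab_act g R" using assms by (auto simp: tab_orbit_def)
  show ?thesis
  proof
    show "tab_orbit Klein4 A \<subseteq> tab_orbit Klein4 R"
      using g K_comp by (auto simp: tab_orbit_def tab_act_comp)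
    show "tab_orbit Klein4 R \<subseteq> tab_orbit Klein4 A"
    proof
      fix B assume "B \<in> tab_orbit Klein4 R"
      then obtain h where h: "h \<in> Klein4" "B = tab_act h R" by (auto simp: tab_orbit_def)
      have "B = tab_act (h \<circ> g) A" using g h K_inv[OF g(1)]
        by (simp add: tab_act_comp comp_assoc)
      then show "B \<in> tab_orbit Klein4 A" using K_comp[OF g(1) h(1)] by (auto simp: tab_orbit_def)
    qed
  qed
qed

lemma rep_in: "reps ! i \<in> Ob i"
  unfolding Ob_def tab_orbit_def using K_id tab_act_id by (metis image_eqI)

lemma less4: "(i::nat) < 4 \<longleftrightarrow> i = 0 \<or> i = 1 \<or> i = 2 \<or> i = 3" by arith
lemma less3: "(i::nat) < 3 \<longleftrightarrow> i = 0 \<or> i = 1 \<or> i = 2" by arith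
lemma less2: "(i::nat) < 2 \<longleftrightarrow> i = 0 \<or> i = 1" by arith
lemma less1: "(i::nat) < 1 \<longleftrightarrow> i = 0" by arith

lemmas tabsimps = tabloids_def reps_def All_less_Suc2

lemma reps_tab:
  "reps ! 0 \<in> tabloids 4 [4]" "reps ! 1 \<in> tabloids 4 [3,1]"
  "reps ! 2 \<in> tabloids 4 [2,2]" "reps ! 3 \<in> tabloids 4 [2,2]" "reps ! 4 \<in> tabloids 4 [2,2]"
  "reps ! 5 \<in> tabloids 4 [2,1,1]" "reps ! 6 \<in> tabloids 4 [2,1,1]" "reps ! 7 \<in> tabloids 4 [2,1,1]"
  "reps ! 8 \<in> tabloids 4 [1,1,1,1]" "reps ! 9 \<in> tabloids 4 [1,1,1,1]" "reps ! 10 \<in> tabloids 4 [1,1,1,1]"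
  "reps ! 11 \<in> tabloids 4 [1,1,1,1]" "reps ! 12 \<in> tabloids 4 [1,1,1,1]" "reps ! 13 \<in> tabloids 4 [1,1,1,1]"
  by (simp_all add: tabsimps)

lemma distinct_reps: "\<forall>j\<in>{0,1,2,3,4,5,6,7,8,9,10,11,12,13}. \<forall>i\<in>{0,1,2,3,4,5,6,7,8,9,10,11,12,13}. i \<noteq> j \<longrightarrow> reps ! i \<notin> Ob j"
  by (simp add: Ob_def reps_def tab_orbit_def Klein4_def tab_act_def transpose_def doubleton_eq_iff set4_eq)

definition S14 :: "nat set" where "S14 = {0,1,2,3,4,5,6,7,8,9,10,11,12,13}"

lemma Ob_eq: "i \<in> S14 \<Longrightarrow> j \<in> S14 \<Longrightarrow> (Ob i = Ob j) = (i = j)"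
  using distinct_reps rep_in unfolding S14_def by metis

lemma inj_Ob: "inj_on Ob S14"
  by (meson Ob_eq inj_onI)

lemma shape_eq:
  assumes cover: "\<And>A. A \<in> tabloids 4 lam \<Longrightarrow> \<exists>k\<in>S. A \<in> Ob k"
    and reps: "\<And>k. k \<in> S \<Longrightarrow> reps ! k \<in> tabloids 4 lam"
  shows "orbits_shape 4 Klein4 lam = Ob ` S"
proof
  show "orbits_shape 4 Klein4 lam \<subseteq> Ob ` S"
  proof
    fix x assume "x \<in> orbits_shape 4 Klein4 lam"
    then obtain A where A: "A \<in> tabloids 4 lam" "x = tab_orbit Klein4 A" by (auto simp: orbits_shape_def)
    obtain k where k: "k \<in> S" "A \<in> Ob k" using cover[OF A(1)] by blast
    have "x = Ob k" using A(2) orb_mem[of A "reps ! k"] k(2) unfolding Ob_def by simp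
    then show "x \<in> Ob ` S" using k by blast
  qed
  show "Ob ` S \<subseteq> orbits_shape 4 Klein4 lam"
    using reps unfolding orbits_shape_def Ob_def by blast
qed

lemma tab_list4: "length A = 4 \<Longrightarrow> A = [A!0, A!1, A!2, A!3]"
  by (rule nth_equalityI) (auto simp: less4)
lemma tab_list3: "length A = 3 \<Longrightarrow> A = [A!0, A!1, A!2]"
  by (rule nth_equalityI) (auto simp: less3)
lemma tab_list2: "length A = 2 \<Longrightarrow> A = [A!0, A!1]"
  by (rule nth_equalityI) (auto simp: less2)
lemma tab_list1: "length A = 1 \<Longrightarrow> A = [A!0]"
  by (rule nth_equalityI) (auto simp: less1)

lemma rowI1: "A \<in> tabloids 4 lam \<Longrightarrow> i < length lam \<Longrightarrow> lam!i = 1 \<Longrightarrow> A!i \<in> {{1},{2},{3},{4}}"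
  using tab_row[of A 4 lam i] row1[of "A!i"] by simp
lemma rowI2: "A \<in> tabloids 4 lam \<Longrightarrow> i < length lam \<Longrightarrow> lam!i = 2 \<Longrightarrow> A!i \<in> {{1,2},{1,3},{1,4},{2,3},{2,4},{3,4}}"
  using tab_row[of A 4 lam i] row2[of "A!i"] by simp
lemma rowI3: "A \<in> tabloids 4 lam \<Longrightarrow> i < length lam \<Longrightarrow> lam!i = 3 \<Longrightarrow> A!i \<in> {{1,2,3},{1,2,4},{1,3,4},{2,3,4}}"
  using tab_row[of A 4 lam i] row3[of "A!i"] by simp
lemma rowI4: "A \<in> tabloids 4 lam \<Longrightarrow> i < length lam \<Longrightarrow> lam!i = 4 \<Longrightarrow> A!i = {1,2,3,4}"
  using tab_row[of A 4 lam i] row4[of "A!i"] by simp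

lemma os1111: "orbits_shape 4 Klein4 [1,1,1,1] = Ob ` {8,9,10,11,12,13}"
proof (rule shape_eq)
  fix A assume A: "A \<in> tabloids 4 [1,1,1,1]"
  have L: "A = [A!0, A!1, A!2, A!3]" using tab_len[OF A] by (intro tab_list4) simp
  have r: "A!0 \<in> {{1},{2},{3},{4}}" "A!1 \<in> {{1},{2},{3},{4}}" "A!2 \<in> {{1},{2},{3},{4}}" "A!3 \<in> {{1},{2},{3},{4}}"
    by (rule rowI1[OF A]; simp)+
  have d: "A!i \<inter> A!j = {}" if "i < 4" "j < 4" "i \<noteq> j" for i j
    using tab_disj[OF A, of i j] that by simp
  have "[A!0, A!1, A!2, A!3] \<in> Ob 8 \<union> Ob 9 \<union> Ob 10 \<union> Ob 11 \<union> Ob 12 \<union> Ob 13"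
    using r d[of 0 1] d[of 0 2] d[of 0 3] d[of 1 2] d[of 1 3] d[of 2 3] by (intro enum1111) simp_all
  then show "\<exists>k\<in>{8,9,10,11,12,13}. A \<in> Ob k" using L by auto
qed (use reps_tab in auto)

lemma os211: "orbits_shape 4 Klein4 [2,1,1] = Ob ` {5,6,7}"
proof (rule shape_eq)
  fix A assume A: "A \<in> tabloids 4 [2,1,1]"
  have L: "A = [A!0, A!1, A!2]" using tab_len[OF A] by (intro tab_list3) simp
  have r0: "A!0 \<in> {{1,2},{1,3},{1,4},{2,3},{2,4},{3,4}}"
    by (rule rowI2[OF A]; simp)
  have r: "A!1 \<in> {{1},{2},{3},{4}}" "A!2 \<in> {{1},{2},{3},{4}}"
    by (rule rowI1[OF A]; simp)+
  have d: "A!i \<inter> A!j = {}" if "i < 3" "j < 3" "i \<noteq> j" for i j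
    using tab_disj[OF A, of i j] that by simp
  have "[A!0, A!1, A!2] \<in> Ob 5 \<union> Ob 6 \<union> Ob 7"
    using r0 r d[of 0 1] d[of 0 2] d[of 1 2] by (intro enum211) simp_all
  then show "\<exists>k\<in>{5,6,7}. A \<in> Ob k" using L by auto
qed (use reps_tab in auto)

lemma os22: "orbits_shape 4 Klein4 [2,2] = Ob ` {2,3,4}"
proof (rule shape_eq)
  fix A assume A: "A \<in> tabloids 4 [2,2]"
  have L: "A = [A!0, A!1]" using tab_len[OF A] by (intro tab_list2) simp
  have r: "A!0 \<in> {{1,2},{1,3},{1,4},{2,3},{2,4},{3,4}}" "A!1 \<in> {{1,2},{1,3},{1,4},{2,3},{2,4},{3,4}}"
    by (rule rowI2[OF A]; simp)+
  have d: "A!0 \<inter> A!1 = {}"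
    using tab_disj[OF A, of 0 1] by simp
  have "[A!0, A!1] \<in> Ob 2 \<union> Ob 3 \<union> Ob 4"
    using r d by (intro enum22)
  then show "\<exists>k\<in>{2,3,4}. A \<in> Ob k" using L by auto
qed (use reps_tab in auto)

lemma os31: "orbits_shape 4 Klein4 [3,1] = Ob ` {1}"
proof (rule shape_eq)
  fix A assume A: "A \<in> tabloids 4 [3,1]"
  have L: "A = [A!0, A!1]" using tab_len[OF A] by (intro tab_list2) simp
  have r0: "A!0 \<in> {{1,2,3},{1,2,4},{1,3,4},{2,3,4}}"
    by (rule rowI3[OF A]; simp)
  have r1: "A!1 \<in> {{1},{2},{3},{4}}"
    by (rule rowI1[OF A]; simp)
  have d: "A!0 \<inter> A!1 = {}"
    using tab_disj[OF A, of 0 1] by simp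
  have "[A!0, A!1] \<in> Ob 1"
    using r0 r1 d by (intro enum31)
  then show "\<exists>k\<in>{1}. A \<in> Ob k" using L by auto
qed (use reps_tab in auto)

lemma os4: "orbits_shape 4 Klein4 [4] = Ob ` {0}"
proof (rule shape_eq)
  fix A assume A: "A \<in> tabloids 4 [4]"
  have L: "A = [A!0]" using tab_len[OF A] by (intro tab_list1) simp
  have r0: "A!0 = {1,2,3,4}"
    by (rule rowI4[OF A]; simp)
  have "A = reps ! 0" by (subst L) (simp add: r0 reps_def)
  then show "\<exists>k\<in>{0}. A \<in> Ob k" using rep_in by blast
qed (use reps_tab in auto)

lemma orbits_eq: "orbits 4 Klein4 = Ob ` S14"
  unfolding orbits_def part4 using os4 os31 os22 os211 os1111 by (auto simp: S14_def)




definition X :: "nat set list set set" where "X = Ob ` S14"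
definition T22 :: "nat set list set set" where "T22 = Ob ` {2,3,4}"
definition T211 :: "nat set list set set" where "T211 = Ob ` {5,6,7}"
definition T1 :: "nat set list set set" where "T1 = Ob ` {8,9,10,11,12,13}"
definition unsh :: "nat set list set \<Rightarrow> nat set list set" where
  "unsh x = (if x = Ob 5 then Ob 2 else if x = Ob 6 then Ob 3 else Ob 4)"
definition sh :: "nat set list set \<Rightarrow> nat set list set" where
  "sh y = (if y = Ob 2 then Ob 5 else if y = Ob 3 then Ob 6 else Ob 7)"

definition RS :: "nat set list set \<Rightarrow> nat set list set \<Rightarrow> bool" where
  "RS a b = (b = Ob 0 \<or> (b = Ob 1 \<and> a \<noteq> Ob 0) \<or> (b \<in> T22 \<and> (a = b \<or> a \<in> T1))
     \<or> (a \<in> T211 \<and> b \<in> T22 \<and> unsh a = b) \<or> (b \<in> T211 \<and> (a = b \<or> a \<in> T1)) \<or> (b \<in> T1 \<and> a = b))"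

lemma Ob_in: "i \<in> S14 \<Longrightarrow> K \<subseteq> S14 \<Longrightarrow> (Ob i \<in> Ob ` K) = (i \<in> K)"
  using inj_Ob by (simp add: inj_on_image_mem_iff)

lemma Rn_RS: "\<forall>i\<in>S14. \<forall>j\<in>S14. Rn i j = RS (Ob i) (Ob j)"
  unfolding S14_def
  by (simp add: Rn_def RS_def T22_def T211_def T1_def unsh_def Ob_eq Ob_in S14_def)

lemma TBL: assumes "a \<in> X" "b \<in> X" shows "orbit_le a b = RS a b"
proof -
  obtain i j where ij: "i \<in> S14" "j \<in> S14" "a = Ob i" "b = Ob j" using assms by (auto simp: X_def)
  have "orbit_le a b = Rn i j" using tbl ij unfolding S14_def by blast
  also have "\<dots> = RS a b" using Rn_RS ij by blast
  finally show ?thesis .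
qed

lemma classes:
  "Ob 0 \<in> X" "Ob 1 \<in> X" "T22 \<subseteq> X" "T211 \<subseteq> X" "T1 \<subseteq> X"
  "Ob 0 \<noteq> Ob 1" "Ob 0 \<notin> T22" "Ob 0 \<notin> T211" "Ob 0 \<notin> T1" "Ob 1 \<notin> T22" "Ob 1 \<notin> T211" "Ob 1 \<notin> T1"
  "T22 \<inter> T211 = {}" "T22 \<inter> T1 = {}" "T211 \<inter> T1 = {}"
  "X = {Ob 0} \<union> {Ob 1} \<union> T22 \<union> T211 \<union> T1"
  "finite X"
  by (auto simp: X_def T22_def T211_def T1_def S14_def Ob_eq)

lemma unsh_sh:
  "x \<in> T211 \<Longrightarrow> unsh x \<in> T22" "y \<in> T22 \<Longrightarrow> sh y \<in> T211"
  "x \<in> T211 \<Longrightarrow> sh (unsh x) = x" "y \<in> T22 \<Longrightarrow> unsh (sh y) = y"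
  by (auto simp: T22_def T211_def unsh_def sh_def Ob_eq S14_def)

lemma shapes:
  "orbits_shape 4 Klein4 [4] = {Ob 0}" "orbits_shape 4 Klein4 [3,1] = {Ob 1}"
  "orbits_shape 4 Klein4 [2,2] = T22" "orbits_shape 4 Klein4 [2,1,1] = T211"
  "orbits_shape 4 Klein4 [1,1,1,1] = T1"
  using os4 os31 os22 os211 os1111 by (simp_all add: T22_def T211_def T1_def)

lemma orbitsX: "orbits 4 Klein4 = X" using orbits_eq X_def by simp

lemma X_cases: "a \<in> X \<Longrightarrow> a = Ob 0 \<or> a = Ob 1 \<or> a \<in> T22 \<or> a \<in> T211 \<or> a \<in> T1"
  using classes(16) by auto

lemma AutD:
  assumes A: "\<alpha> \<in> Aut0_set 4 Klein4"
  shows "\<alpha> \<in> extensional X" "bij_betw \<alpha> X X" "\<alpha> ` T22 = T22" "\<alpha> ` T211 = T211" "\<alpha> ` T1 = T1"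
    "\<alpha> (Ob 0) = Ob 0" "\<alpha> (Ob 1) = Ob 1" "\<And>a b. a \<in> X \<Longrightarrow> b \<in> X \<Longrightarrow> orbit_le (\<alpha> a) (\<alpha> b) = orbit_le a b"
proof -
  have B: "\<alpha> \<in> Bij X" and O: "\<forall>a\<in>X. \<forall>b\<in>X. orbit_le (\<alpha> a) (\<alpha> b) = orbit_le a b"
    and S: "\<forall>mu\<in>partitions 4. \<alpha> ` orbits_shape 4 Klein4 mu = orbits_shape 4 Klein4 mu"
    using A by (auto simp: Aut0_set_def orbitsX)
  show "\<alpha> \<in> extensional X" "bij_betw \<alpha> X X" using B by (auto simp: Bij_def)
  have m: "[4] \<in> partitions 4" "[3,1] \<in> partitions 4" "[2,2] \<in> partitions 4"
    "[2,1,1] \<in> partitions 4" "[1,1,1,1] \<in> partitions 4"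
    by (simp_all only: part4 insert_iff simp_thms)
  have "\<alpha> ` {Ob 0} = {Ob 0}" "\<alpha> ` {Ob 1} = {Ob 1}"
    using S m(1) m(2) unfolding shapes[symmetric] by blast+
  then show "\<alpha> (Ob 0) = Ob 0" "\<alpha> (Ob 1) = Ob 1" by simp_all
  show "\<alpha> ` T22 = T22" "\<alpha> ` T211 = T211" "\<alpha> ` T1 = T1"
    using S m(3) m(4) m(5) unfolding shapes[symmetric] by blast+
  show "\<And>a b. a \<in> X \<Longrightarrow> b \<in> X \<Longrightarrow> orbit_le (\<alpha> a) (\<alpha> b) = orbit_le a b" using O by blast
qed

lemma restr_Bij: "bij_betw \<alpha> X X \<Longrightarrow> T \<subseteq> X \<Longrightarrow> \<alpha> ` T = T \<Longrightarrow> restrict \<alpha> T \<in> Bij T"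
  unfolding Bij_def
  by (simp add: bij_betw_def) (meson inj_on_subset)

lemma restrict_compose: "T \<subseteq> X \<Longrightarrow> \<beta> ` T \<subseteq> T \<Longrightarrow> restrict (compose X \<alpha> \<beta>) T = compose T (restrict \<alpha> T) (restrict \<beta> T)"
  by (auto simp: compose_def restrict_def fun_eq_iff)

lemma Aut_mult: "\<alpha> \<in> Bij X \<Longrightarrow> \<beta> \<in> Bij X \<Longrightarrow> \<alpha> \<otimes>\<^bsub>Aut0 4 Klein4\<^esub> \<beta> = compose X \<alpha> \<beta>"
  by (simp add: Aut0_def BijGroup_def orbitsX)

lemma Aut_carrier: "carrier (Aut0 4 Klein4) = Aut0_set 4 Klein4"
  by (simp add: Aut0_def)

lemma Aut_Bij: "\<alpha> \<in> Aut0_set 4 Klein4 \<Longrightarrow> \<alpha> \<in> Bij X"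
  by (simp add: Aut0_set_def orbitsX)

lemma inj_parts: "inj_on f A \<Longrightarrow> inj_on f B \<Longrightarrow> f ` A \<subseteq> A \<Longrightarrow> f ` B \<subseteq> B \<Longrightarrow> A \<inter> B = {} \<Longrightarrow> inj_on f (A \<union> B)"
  unfolding inj_on_def by blast

lemma Aut_T211:
  assumes A: "\<alpha> \<in> Aut0_set 4 Klein4" and x: "x \<in> T211"
  shows "unsh (\<alpha> x) = \<alpha> (unsh x)"
proof -
  have ux: "unsh x \<in> T22" using x unsh_sh by blast
  have X: "x \<in> X" "unsh x \<in> X" using x ux classes by blast+
  have "RS x (unsh x)" using x ux unfolding RS_def by blast
  then have "orbit_le x (unsh x)" using TBL[OF X] by blast
  then have le: "orbit_le (\<alpha> x) (\<alpha> (unsh x))" using AutD(8)[OF A X] by blast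
  have ax: "\<alpha> x \<in> T211" using AutD(4)[OF A] x by blast
  have au: "\<alpha> (unsh x) \<in> T22" using AutD(3)[OF A] ux by blast
  have "\<alpha> x \<in> X" "\<alpha> (unsh x) \<in> X" using ax au classes by blast+
  then have R: "RS (\<alpha> x) (\<alpha> (unsh x))" using TBL le by blast
  have d1: "\<alpha> (unsh x) \<noteq> Ob 0" using au classes(7) by metis
  have d2: "\<alpha> (unsh x) \<noteq> Ob 1" using au classes(10) by metis
  have d3: "\<alpha> x \<noteq> \<alpha> (unsh x)" using ax au classes(13) by (metis disjoint_iff)
  have d4: "\<alpha> x \<notin> T1" using ax classes(15) by (metis disjoint_iff)
  have d5: "\<alpha> (unsh x) \<notin> T211" using au classes(13) by (metis disjoint_iff)
  have d6: "\<alpha> (unsh x) \<notin> T1" using au classes(14) by (metis disjoint_iff)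
  show ?thesis using R ax au d1 d2 d3 d4 d5 d6 unfolding RS_def by blast
qed




lemma Bij_sym_iso:
  assumes h: "bij_betw h {1..n} T"
  shows "(\<lambda>f. \<lambda>k. if k \<in> {1..n} then inv_into {1..n} h (f (h k)) else k) \<in> iso (BijGroup T) (sym_group n)"
proof -
  define hi where "hi = inv_into {1..n} h"
  have hi: "bij_betw hi T {1..n}" using h unfolding hi_def by (rule bij_betw_inv_into)
  have hih: "\<And>k. k \<in> {1..n} \<Longrightarrow> hi (h k) = k" using h unfolding hi_def by (simp add: bij_betw_inv_into_left)
  have hhi: "\<And>y. y \<in> T \<Longrightarrow> h (hi y) = y" using h unfolding hi_def by (simp add: bij_betw_inv_into_right)
  have hT: "\<And>k. k \<in> {1..n} \<Longrightarrow> h k \<in> T" using h by (meson bij_betwE)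
  have hiT: "\<And>y. y \<in> T \<Longrightarrow> hi y \<in> {1..n}" using hi by (meson bij_betwE)
  define P where "P = (\<lambda>f. \<lambda>k. if k \<in> {1..n} then hi (f (h k)) else k)"
  have Pin: "\<And>f k. k \<in> {1..n} \<Longrightarrow> P f k = hi (f (h k))" by (simp add: P_def)
  have Pout: "\<And>f k. k \<notin> {1..n} \<Longrightarrow> P f k = k" unfolding P_def by (simp only: if_False)
  have fT: "\<And>f y. f \<in> Bij T \<Longrightarrow> y \<in> T \<Longrightarrow> f y \<in> T" by (meson Bij_imp_funcset funcset_mem)
  have perm: "P f permutes {1..n}" if f: "f \<in> Bij T" for f
  proof (rule bij_imp_permutes)
    have "bij_betw (hi \<circ> f \<circ> h) {1..n} {1..n}"
      using f h hi unfolding Bij_def by (auto intro: bij_betw_trans)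
    moreover have "\<And>k. k \<in> {1..n} \<Longrightarrow> (hi \<circ> f \<circ> h) k = P f k" by (simp add: P_def)
    ultimately show "bij_betw (P f) {1..n} {1..n}" using bij_betw_cong by blast
    show "P f x = x" if "x \<notin> {1..n}" for x using that unfolding P_def by (simp only: if_False)
  qed
  have hom: "P \<in> hom (BijGroup T) (sym_group n)"
  proof (rule homI)
    show "\<And>f. f \<in> carrier (BijGroup T) \<Longrightarrow> P f \<in> carrier (sym_group n)"
      using perm by (simp add: BijGroup_def sym_group_carrier)
    fix f g assume "f \<in> carrier (BijGroup T)" "g \<in> carrier (BijGroup T)"
    then have f: "f \<in> Bij T" and g: "g \<in> Bij T" by (simp_all add: BijGroup_def)
    have "P (compose T f g) = P f \<circ> P g"
    proof
      fix k show "P (compose T f g) k = (P f \<circ> P g) k"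
      proof (cases "k \<in> {1..n}")
        case True
        then have "hi (g (h k)) \<in> {1..n}" "h (hi (g (h k))) = g (h k)" "h k \<in> T"
          using fT[OF g] hT hhi hiT by blast+
        then show ?thesis using True by (simp add: Pin compose_def)
      next
        case False then show ?thesis by (simp add: Pout)
      qed
    qed
    then show "P (f \<otimes>\<^bsub>BijGroup T\<^esub> g) = P f \<otimes>\<^bsub>sym_group n\<^esub> P g"
      using f g by (simp add: BijGroup_def sym_group_mult)
  qed
  have inj: "inj_on P (Bij T)"
  proof
    fix f g assume f: "f \<in> Bij T" and g: "g \<in> Bij T" and e: "P f = P g"
    show "f = g"
    proof
      fix y show "f y = g y"
      proof (cases "y \<in> T")
        case True
        have "P f (hi y) = P g (hi y)" using e by simp
        then have "hi (f y) = hi (g y)" using True hiT hhi by (simp add: Pin)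
        moreover have "inj_on hi T" using hi bij_betw_def by blast
        ultimately show ?thesis using fT[OF f True] fT[OF g True] by (meson inj_onD)
      next
        case False
        then show ?thesis using f g unfolding Bij_def extensional_def by simp
      qed
    qed
  qed
  have surj: "carrier (sym_group n) \<subseteq> P ` Bij T"
  proof
    fix p assume "p \<in> carrier (sym_group n)"
    then have p: "p permutes {1..n}" by (simp add: sym_group_carrier)
    define f where "f = restrict (\<lambda>y. h (p (hi y))) T"
    have pb: "bij_betw p {1..n} {1..n}" using p by (rule permutes_imp_bij)
    have "bij_betw (h \<circ> p \<circ> hi) T T" using hi pb h by (auto intro: bij_betw_trans)
    moreover have "\<And>y. y \<in> T \<Longrightarrow> (h \<circ> p \<circ> hi) y = f y" by (simp add: f_def)
    ultimately have "bij_betw f T T" using bij_betw_cong by blast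
    then have fB: "f \<in> Bij T" by (simp add: Bij_def f_def)
    have "P f = p"
    proof
      fix k show "P f k = p k"
      proof (cases "k \<in> {1..n}")
        case True
        then have "p k \<in> {1..n}" using pb by (meson bij_betwE)
        then show ?thesis using True hT hih by (simp add: Pin f_def)
      next
        case False
        then show ?thesis using p by (simp add: Pout permutes_not_in)
      qed
    qed
    then show "p \<in> P ` Bij T" using fB by blast
  qed
  have "bij_betw P (carrier (BijGroup T)) (carrier (sym_group n))"
    unfolding bij_betw_def using inj surj hom by (auto simp: BijGroup_def hom_def)
  then show ?thesis using hom unfolding P_def hi_def iso_def by simp
qed




definition mk :: "(nat set list set \<Rightarrow> nat set list set) \<Rightarrow> (nat set list set \<Rightarrow> nat set list set) \<Rightarrow> nat set list set \<Rightarrow> nat set list set" where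
  "mk \<sigma> \<tau> x = (if x \<in> T22 then \<sigma> x else if x \<in> T211 then sh (\<sigma> (unsh x)) else if x \<in> T1 then \<tau> x
     else if x \<in> X then x else undefined)"

lemma Bij_in: "f \<in> Bij T \<Longrightarrow> y \<in> T \<Longrightarrow> f y \<in> T"
  by (meson Bij_imp_funcset funcset_mem)

lemma Bij_inj: "f \<in> Bij T \<Longrightarrow> inj_on f T"
  by (simp add: Bij_def bij_betw_def)

lemma mk_construct:
  assumes s: "\<sigma> \<in> Bij T22" and t: "\<tau> \<in> Bij T1"
  shows "mk \<sigma> \<tau> \<in> Aut0_set 4 Klein4" "restrict (mk \<sigma> \<tau>) T22 = \<sigma>" "restrict (mk \<sigma> \<tau>) T1 = \<tau>"
proof -
  let ?a = "mk \<sigma> \<tau>"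
  have c: "Ob 0 \<in> X" "Ob 1 \<in> X" "T22 \<subseteq> X" "T211 \<subseteq> X" "T1 \<subseteq> X"
  "Ob 0 \<noteq> Ob 1" "Ob 0 \<notin> T22" "Ob 0 \<notin> T211" "Ob 0 \<notin> T1" "Ob 1 \<notin> T22" "Ob 1 \<notin> T211" "Ob 1 \<notin> T1"
  "T22 \<inter> T211 = {}" "T22 \<inter> T1 = {}" "T211 \<inter> T1 = {}" using classes by simp_all
  have v22: "\<And>x. x \<in> T22 \<Longrightarrow> ?a x = \<sigma> x" by (simp add: mk_def)
  have v211: "\<And>x. x \<in> T211 \<Longrightarrow> ?a x = sh (\<sigma> (unsh x))" using c(13) by (auto simp: mk_def)
  have v1: "\<And>x. x \<in> T1 \<Longrightarrow> ?a x = \<tau> x" using c(14,15) by (auto simp: mk_def)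
  have v0: "?a (Ob 0) = Ob 0" using c by (simp add: mk_def)
  have v1': "?a (Ob 1) = Ob 1" using c by (simp add: mk_def)
  have vout: "\<And>x. x \<notin> X \<Longrightarrow> ?a x = undefined" using c by (auto simp: mk_def)
  have p22: "\<And>x. x \<in> T22 \<Longrightarrow> ?a x \<in> T22" using v22 Bij_in[OF s] by simp
  have p211: "\<And>x. x \<in> T211 \<Longrightarrow> ?a x \<in> T211" using v211 Bij_in[OF s] unsh_sh by simp
  have p1: "\<And>x. x \<in> T1 \<Longrightarrow> ?a x \<in> T1" using v1 Bij_in[OF t] by simp
  have i22: "inj_on ?a T22" using Bij_inj[OF s] v22 by (simp add: inj_on_def)
  have i1: "inj_on ?a T1" using Bij_inj[OF t] v1 by (simp add: inj_on_def)
  have i211: "inj_on ?a T211"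
  proof
    fix x y assume x: "x \<in> T211" and y: "y \<in> T211" and e: "?a x = ?a y"
    have "sh (\<sigma> (unsh x)) = sh (\<sigma> (unsh y))" using e v211 x y by simp
    then have "unsh (sh (\<sigma> (unsh x))) = unsh (sh (\<sigma> (unsh y)))" by simp
    then have "\<sigma> (unsh x) = \<sigma> (unsh y)" using unsh_sh Bij_in[OF s] x y by simp
    then have "unsh x = unsh y" using Bij_inj[OF s] unsh_sh x y by (meson inj_onD)
    then show "x = y" using unsh_sh x y by metis
  qed
  have i0: "inj_on ?a {Ob 0}" "inj_on ?a {Ob 1}" by simp_all
  have Xeq: "X = (((({Ob 0} \<union> {Ob 1}) \<union> T22) \<union> T211) \<union> T1)" using classes(16) by simp
  have injX: "inj_on ?a X"
    unfolding Xeq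
    apply (rule inj_parts)+
    using i0 i22 i211 i1 p22 p211 p1 v0 v1' c by auto
  have imgX: "?a ` X \<subseteq> X"
  proof (rule image_subsetI)
    fix x assume x: "x \<in> X"
    show "?a x \<in> X" using X_cases[OF x] p22 p211 p1 v0 v1' c(1-5) by (metis subsetD)
  qed
  have fin: "finite X" by (rule classes(17))
  have bijX: "bij_betw ?a X X" using endo_inj_surj[OF fin imgX injX] injX by (simp add: bij_betw_def)
  have BX: "?a \<in> Bij X" using bijX vout by (simp add: Bij_def extensional_def)
  have im22: "?a ` T22 = T22" using endo_inj_surj[of T22 ?a] p22 i22 c fin by (meson finite_subset image_subsetI)
  have im211: "?a ` T211 = T211" using endo_inj_surj[of T211 ?a] p211 i211 c fin by (meson finite_subset image_subsetI)
  have im1: "?a ` T1 = T1" using endo_inj_surj[of T1 ?a] p1 i1 c fin by (meson finite_subset image_subsetI)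
  have shp: "\<forall>mu\<in>partitions 4. ?a ` orbits_shape 4 Klein4 mu = orbits_shape 4 Klein4 mu"
    unfolding part4 using im22 im211 im1 v0 v1' shapes[simplified] shapes by simp
  have e22: "\<And>a. a \<in> X \<Longrightarrow> (?a a \<in> T22) = (a \<in> T22)"
    using X_cases p22 p211 p1 v0 v1' c by (smt (verit) disjoint_iff)
  have e211: "\<And>a. a \<in> X \<Longrightarrow> (?a a \<in> T211) = (a \<in> T211)"
    using X_cases p22 p211 p1 v0 v1' c by (smt (verit) disjoint_iff)
  have e1: "\<And>a. a \<in> X \<Longrightarrow> (?a a \<in> T1) = (a \<in> T1)"
    using X_cases p22 p211 p1 v0 v1' c by (smt (verit) disjoint_iff)
  have eq: "\<And>a b. a \<in> X \<Longrightarrow> b \<in> X \<Longrightarrow> (?a a = ?a b) = (a = b)"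
    using injX by (meson inj_onD)
  have e0: "\<And>a. a \<in> X \<Longrightarrow> (?a a = Ob 0) = (a = Ob 0)" using eq v0 c(1) by metis
  have e0': "\<And>a. a \<in> X \<Longrightarrow> (?a a = Ob 1) = (a = Ob 1)" using eq v1' c(2) by metis
  have u: "\<And>a b. a \<in> X \<Longrightarrow> b \<in> X \<Longrightarrow> (a \<in> T211 \<and> b \<in> T22 \<and> unsh (?a a) = ?a b) = (a \<in> T211 \<and> b \<in> T22 \<and> unsh a = b)"
  proof -
    fix a b assume "a \<in> X" "b \<in> X"
    show "(a \<in> T211 \<and> b \<in> T22 \<and> unsh (?a a) = ?a b) = (a \<in> T211 \<and> b \<in> T22 \<and> unsh a = b)"
    proof (cases "a \<in> T211 \<and> b \<in> T22")
      case True
      then have "unsh (?a a) = \<sigma> (unsh a)" "?a b = \<sigma> b" using v211 v22 unsh_sh Bij_in[OF s] by simp_all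
      moreover have "(\<sigma> (unsh a) = \<sigma> b) = (unsh a = b)"
        using True unsh_sh Bij_inj[OF s] by (meson inj_onD)
      ultimately show ?thesis using True by simp
    next
      case False then show ?thesis by blast
    qed
  qed
  have ord: "\<forall>a\<in>X. \<forall>b\<in>X. orbit_le (?a a) (?a b) = orbit_le a b"
  proof (intro ballI)
    fix a b assume a: "a \<in> X" and b: "b \<in> X"
    have "?a a \<in> X" "?a b \<in> X" using imgX a b by blast+
    then have "orbit_le (?a a) (?a b) = RS (?a a) (?a b)" using TBL by blast
    also have "\<dots> = RS a b"
      unfolding RS_def using a b by (simp only: e0 e0' e22 e211 e1 eq u)
    also have "\<dots> = orbit_le a b" using TBL a b by blast
    finally show "orbit_le (?a a) (?a b) = orbit_le a b" .
  qed
  show "?a \<in> Aut0_set 4 Klein4" unfolding Aut0_set_def orbitsX using BX ord shp by blast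
  show "restrict ?a T22 = \<sigma>"
  proof
    fix x show "restrict ?a T22 x = \<sigma> x"
      using v22 s by (cases "x \<in> T22") (auto simp: Bij_def extensional_def)
  qed
  show "restrict ?a T1 = \<tau>"
  proof
    fix x show "restrict ?a T1 x = \<tau> x"
      using v1 t by (cases "x \<in> T1") (auto simp: Bij_def extensional_def)
  qed
qed


lemma Phi_iso: "(\<lambda>\<alpha>. (restrict \<alpha> T22, restrict \<alpha> T1)) \<in> iso (Aut0 4 Klein4) (BijGroup T22 \<times>\<times> BijGroup T1)"
proof (rule isoI)
  have RB: "restrict \<alpha> T22 \<in> Bij T22" "restrict \<alpha> T1 \<in> Bij T1" if A: "\<alpha> \<in> Aut0_set 4 Klein4" for \<alpha>
    using restr_Bij[OF AutD(2)[OF A] classes(3) AutD(3)[OF A]] restr_Bij[OF AutD(2)[OF A] classes(5) AutD(5)[OF A]]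
    by simp_all
  show "(\<lambda>\<alpha>. (restrict \<alpha> T22, restrict \<alpha> T1)) \<in> hom (Aut0 4 Klein4) (BijGroup T22 \<times>\<times> BijGroup T1)"
  proof (rule homI)
    fix \<alpha> assume "\<alpha> \<in> carrier (Aut0 4 Klein4)"
    then have A: "\<alpha> \<in> Aut0_set 4 Klein4" by (simp add: Aut_carrier)
    show "(restrict \<alpha> T22, restrict \<alpha> T1) \<in> carrier (BijGroup T22 \<times>\<times> BijGroup T1)"
      using RB[OF A] by (simp add: BijGroup_def)
  next
    fix \<alpha> \<beta> assume "\<alpha> \<in> carrier (Aut0 4 Klein4)" "\<beta> \<in> carrier (Aut0 4 Klein4)"
    then have A: "\<alpha> \<in> Aut0_set 4 Klein4" and B: "\<beta> \<in> Aut0_set 4 Klein4" by (simp_all add: Aut_carrier)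
    have m: "\<alpha> \<otimes>\<^bsub>Aut0 4 Klein4\<^esub> \<beta> = compose X \<alpha> \<beta>" using Aut_mult Aut_Bij A B by blast
    have r1: "restrict (compose X \<alpha> \<beta>) T22 = compose T22 (restrict \<alpha> T22) (restrict \<beta> T22)"
      by (rule restrict_compose[OF classes(3)]) (simp add: AutD(3)[OF B])
    have r2: "restrict (compose X \<alpha> \<beta>) T1 = compose T1 (restrict \<alpha> T1) (restrict \<beta> T1)"
      by (rule restrict_compose[OF classes(5)]) (simp add: AutD(5)[OF B])
    show "(restrict (\<alpha> \<otimes>\<^bsub>Aut0 4 Klein4\<^esub> \<beta>) T22, restrict (\<alpha> \<otimes>\<^bsub>Aut0 4 Klein4\<^esub> \<beta>) T1) =
          (restrict \<alpha> T22, restrict \<alpha> T1) \<otimes>\<^bsub>BijGroup T22 \<times>\<times> BijGroup T1\<^esub> (restrict \<beta> T22, restrict \<beta> T1)"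
      unfolding m r1 r2 using RB[OF A] RB[OF B] by (simp add: BijGroup_def)
  qed
  have inj: "inj_on (\<lambda>\<alpha>. (restrict \<alpha> T22, restrict \<alpha> T1)) (Aut0_set 4 Klein4)"
  proof
    fix \<alpha> \<beta> assume A: "\<alpha> \<in> Aut0_set 4 Klein4" and B: "\<beta> \<in> Aut0_set 4 Klein4"
      and e: "(restrict \<alpha> T22, restrict \<alpha> T1) = (restrict \<beta> T22, restrict \<beta> T1)"
    have e22: "\<And>x. x \<in> T22 \<Longrightarrow> \<alpha> x = \<beta> x" using e by (metis prod.inject restrict_apply')
    have e1: "\<And>x. x \<in> T1 \<Longrightarrow> \<alpha> x = \<beta> x" using e by (metis prod.inject restrict_apply')
    show "\<alpha> = \<beta>"
    proof
      fix x show "\<alpha> x = \<beta> x"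
      proof (cases "x \<in> X")
        case False
        then show ?thesis using AutD(1)[OF A] AutD(1)[OF B] by (simp add: extensional_def)
      next
        case True
        show ?thesis
        proof (cases "x \<in> T211")
          case x: True
          have ux: "unsh x \<in> T22" using x unsh_sh by blast
          have "unsh (\<alpha> x) = unsh (\<beta> x)" using Aut_T211[OF A x] Aut_T211[OF B x] e22[OF ux] by simp
          moreover have "\<alpha> x \<in> T211" "\<beta> x \<in> T211" using AutD(4)[OF A] AutD(4)[OF B] x by blast+
          ultimately show ?thesis using unsh_sh by metis
        next
          case False
          then show ?thesis using X_cases[OF True] e22 e1 AutD(6,7)[OF A] AutD(6,7)[OF B] by metis
        qed
      qed
    qed
  qed
  have surj: "(\<lambda>\<alpha>. (restrict \<alpha> T22, restrict \<alpha> T1)) ` (Aut0_set 4 Klein4) = Bij T22 \<times> Bij T1"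
  proof
    show "(\<lambda>\<alpha>. (restrict \<alpha> T22, restrict \<alpha> T1)) ` (Aut0_set 4 Klein4) \<subseteq> Bij T22 \<times> Bij T1"
      using RB by blast
    show "Bij T22 \<times> Bij T1 \<subseteq> (\<lambda>\<alpha>. (restrict \<alpha> T22, restrict \<alpha> T1)) ` (Aut0_set 4 Klein4)"
    proof
      fix p assume "p \<in> Bij T22 \<times> Bij T1"
      then obtain \<sigma> \<tau> where p: "p = (\<sigma>, \<tau>)" "\<sigma> \<in> Bij T22" "\<tau> \<in> Bij T1" by blast
      show "p \<in> (\<lambda>\<alpha>. (restrict \<alpha> T22, restrict \<alpha> T1)) ` (Aut0_set 4 Klein4)"
        using mk_construct[OF p(2,3)] p(1) by (metis (no_types, lifting) image_eqI)
    qed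
  qed
  show "bij_betw (\<lambda>\<alpha>. (restrict \<alpha> T22, restrict \<alpha> T1)) (carrier (Aut0 4 Klein4)) (carrier (BijGroup T22 \<times>\<times> BijGroup T1))"
    unfolding bij_betw_def using inj surj by (simp add: Aut_carrier BijGroup_def)
qed

lemma le_211_22: "b \<in> T211 \<Longrightarrow> a \<in> T22 \<Longrightarrow> orbit_le b a = (unsh b = a)"
proof -
  assume b: "b \<in> T211" and a: "a \<in> T22"
  have X: "b \<in> X" "a \<in> X" using a b classes by blast+
  have d: "a \<noteq> Ob 0" "a \<noteq> Ob 1" "b \<noteq> a" "b \<notin> T1" "a \<notin> T211" "a \<notin> T1"
    using a b classes(7,10,13,14,15) by (metis disjoint_iff)+
  show ?thesis using TBL[OF X] a b d unfolding RS_def by blast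
qed

lemma card_T: "card T22 = 3" "card T211 = 3" "card T1 = 6"
proof -
  have "inj_on Ob {2,3,4}" "inj_on Ob {5,6,7}" "inj_on Ob {8,9,10,11,12,13}"
    using inj_Ob by (auto simp: S14_def intro: inj_on_subset)
  then show "card T22 = 3" "card T211 = 3" "card T1 = 6"
    by (simp_all add: T22_def T211_def T1_def card_image)
qed

lemma BijT_iso:
  "\<exists>f. f \<in> iso (BijGroup T22) (sym_group 3)" "\<exists>g. g \<in> iso (BijGroup T1) (sym_group 6)"
proof -
  have i1: "inj_on (\<lambda>k. Ob (k+1)) {1..3}"
  proof -
    have "inj_on Ob ((\<lambda>k. k+1) ` {1..3})" using inj_Ob by (rule inj_on_subset) (auto simp: S14_def)
    then show ?thesis using comp_inj_on[of "\<lambda>k. k+1" "{1..3}" Ob] by (simp add: o_def inj_on_def)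
  qed
  have im1: "(\<lambda>k. Ob (k+1)) ` {1..3} = T22"
  proof -
    have "{1..3::nat} = {1,2,3}" by auto
    then show ?thesis unfolding T22_def by (simp add: eval_nat_numeral)
  qed
  show "\<exists>f. f \<in> iso (BijGroup T22) (sym_group 3)"
    using Bij_sym_iso[of "\<lambda>k. Ob (k+1)" 3 T22] i1 im1 by (auto simp: bij_betw_def)
  have i2: "inj_on (\<lambda>k. Ob (k+7)) {1..6}"
  proof -
    have "inj_on Ob ((\<lambda>k. k+7) ` {1..6})" using inj_Ob by (rule inj_on_subset) (auto simp: S14_def)
    then show ?thesis using comp_inj_on[of "\<lambda>k. k+7" "{1..6}" Ob] by (simp add: o_def inj_on_def)
  qed
  have im2: "(\<lambda>k. Ob (k+7)) ` {1..6} = T1"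
  proof -
    have "{1..6::nat} = {1,2,3,4,5,6}" by auto
    then show ?thesis unfolding T1_def by (simp add: eval_nat_numeral)
  qed
  show "\<exists>g. g \<in> iso (BijGroup T1) (sym_group 6)"
    using Bij_sym_iso[of "\<lambda>k. Ob (k+7)" 6 T1] i2 im2 by (auto simp: bij_betw_def)
qed

theorem theorem10p1p1:
  shows "(Aut0 4 Klein4 \<cong> DirProd (sym_group 3) (sym_group 6))
    \<and> (card (orbits_shape 4 Klein4 [4]) = 1)
    \<and> (card (orbits_shape 4 Klein4 [3,1]) = 1)
    \<and> (card (orbits_shape 4 Klein4 [2,2]) = 3)
    \<and> (card (orbits_shape 4 Klein4 [2,1,1]) = 3)
    \<and> (card (orbits_shape 4 Klein4 [1,1,1,1]) = 6)
    \<and> (\<forall>a\<in>orbits_shape 4 Klein4 [2,2]. \<exists>!b. b \<in> orbits_shape 4 Klein4 [2,1,1] \<and> orbit_le b a)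
    \<and> (\<forall>b\<in>orbits_shape 4 Klein4 [2,1,1]. \<exists>!a. a \<in> orbits_shape 4 Klein4 [2,2] \<and> orbit_le b a)
    \<and> (\<forall>\<alpha>\<in>Aut0_set 4 Klein4. \<forall>a\<in>orbits_shape 4 Klein4 [2,2]. \<forall>b\<in>orbits_shape 4 Klein4 [2,1,1].
           (orbit_le b a \<longleftrightarrow> orbit_le (\<alpha> b) (\<alpha> a)))
    \<and> ((\<lambda>\<alpha>. (restrict \<alpha> (orbits_shape 4 Klein4 [2,2]), restrict \<alpha> (orbits_shape 4 Klein4 [1,1,1,1])))
           \<in> iso (Aut0 4 Klein4)
                 (DirProd (BijGroup (orbits_shape 4 Klein4 [2,2])) (BijGroup (orbits_shape 4 Klein4 [1,1,1,1]))))"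
  unfolding shapes
proof (intro conjI)
  obtain f where f: "f \<in> iso (BijGroup T22) (sym_group 3)" using BijT_iso(1) by blast
  obtain g where g: "g \<in> iso (BijGroup T1) (sym_group 6)" using BijT_iso(2) by blast
  have "(\<lambda>(x,y). (f x, g y)) \<in> iso (BijGroup T22 \<times>\<times> BijGroup T1) (sym_group 3 \<times>\<times> sym_group 6)"
    using iso_paired2[OF group_BijGroup group_BijGroup] f g by blast
  then have "(\<lambda>(x,y). (f x, g y)) \<circ> (\<lambda>\<alpha>. (restrict \<alpha> T22, restrict \<alpha> T1)) \<in> iso (Aut0 4 Klein4) (sym_group 3 \<times>\<times> sym_group 6)"
    using Phi_iso iso_set_trans by blast
  then show "Aut0 4 Klein4 \<cong> sym_group 3 \<times>\<times> sym_group 6" by (rule is_isoI)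
  show "card {Ob 0} = 1" "card {Ob 1} = 1" "card T22 = 3" "card T211 = 3" "card T1 = 6"
    using card_T by simp_all
  show "\<forall>a\<in>T22. \<exists>!b. b \<in> T211 \<and> orbit_le b a"
  proof
    fix a assume a: "a \<in> T22"
    show "\<exists>!b. b \<in> T211 \<and> orbit_le b a"
    proof
      show "sh a \<in> T211 \<and> orbit_le (sh a) a" using a unsh_sh le_211_22 by simp
      show "\<And>b. b \<in> T211 \<and> orbit_le b a \<Longrightarrow> b = sh a" using a unsh_sh le_211_22 by metis
    qed
  qed
  show "\<forall>b\<in>T211. \<exists>!a. a \<in> T22 \<and> orbit_le b a"
  proof
    fix b assume b: "b \<in> T211"
    show "\<exists>!a. a \<in> T22 \<and> orbit_le b a"
    proof
      show "unsh b \<in> T22 \<and> orbit_le b (unsh b)" using b unsh_sh le_211_22 by simp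
      show "\<And>a. a \<in> T22 \<and> orbit_le b a \<Longrightarrow> a = unsh b" using b le_211_22 by metis
    qed
  qed
  show "\<forall>\<alpha>\<in>Aut0_set 4 Klein4. \<forall>a\<in>T22. \<forall>b\<in>T211. orbit_le b a = orbit_le (\<alpha> b) (\<alpha> a)"
    using AutD(8) classes(3,4) by blast
  show "(\<lambda>\<alpha>. (restrict \<alpha> T22, restrict \<alpha> T1)) \<in> iso (Aut0 4 Klein4) (BijGroup T22 \<times>\<times> BijGroup T1)"
    by (rule Phi_iso)
qed


end
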